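(* Let $B\in\mathbb R^{n\times m}$, let $\mathcal I_{\mathcal V}$ be a symmetric positive definite $m\times m$ matrix, and let $f:\mathbb R^m\to\mathbb R$ be differentiable with $f\in\mathcal S^{1,1}_{\mu_{f,\mathcal I_{\mathcal V}},L_{f,\mathcal I_{\mathcal V}}}$ with respect to $\mathcal I_{\mathcal V}$. For $u_1,u_2\in\mathbb R^m$ and $p_1,p_2\in\mathbb R^n$ set $v_i=u_i+\mathcal I_{\mathcal V}^{-1}B^\top p_i$. Then $$\big(\nabla f(u_1)-\nabla f(u_2),\ \mathcal I_{\mathcal V}^{-1}B^\top(p_1-p_2)\big)\ \ge\ \frac{\mu_{f,\mathcal I_{\mathcal V}}}{2}\|v_1-v_2\|^2_{\mathcal I_{\mathcal V}}-\frac{L_{f,\mathcal I_{\mathcal V}}}{2}\|B^\top(p_1-p_2)\|^2_{\mathcal I_{\mathcal V}^{-1}}-\frac12\big(\nabla f(u_1)-\nabla f(u_2),u_1-u_2\big).$$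
   Context: For a symmetric positive definite matrix $M$, $\|x\|_M=(Mx,x)^{1/2}$. The Bregman divergence is $D_f(y,x)=f(y)-f(x)-(\nabla f(x),y-x)$, and $f\in\mathcal S^{1,1}_{\mu_{f,M},L_{f,M}}$ with respect to $M$ means $\frac{\mu_{f,M}}{2}\|x-y\|_M^2\le D_f(y,x)\le\frac{L_{f,M}}{2}\|x-y\|_M^2$ for all $x,y$ (with $\mu_{f,M}\ge0$). *)

theory Defs
  imports "HOL-Analysis.Analysis"
begin

definition spd :: "real^'m^'m \<Rightarrow> bool" where
  "spd M \<longleftrightarrow> transpose M = M \<and> (\<forall>x. x \<noteq> 0 \<longrightarrow> (M *v x) \<bullet> x > 0)"

definition normM :: "real^'m^'m \<Rightarrow> real^'m \<Rightarrow> real" where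
  "normM M x = sqrt ((M *v x) \<bullet> x)"

definition bregman :: "(real^'m \<Rightarrow> real) \<Rightarrow> (real^'m \<Rightarrow> real^'m) \<Rightarrow> real^'m \<Rightarrow> real^'m \<Rightarrow> real" where
  "bregman f g y x = f y - f x - g x \<bullet> (y - x)"

definition S11 :: "real^'m^'m \<Rightarrow> real \<Rightarrow> real \<Rightarrow> (real^'m \<Rightarrow> real) \<Rightarrow> (real^'m \<Rightarrow> real^'m) \<Rightarrow> bool" where
  "S11 M \<mu> L f g \<longleftrightarrow> \<mu> \<ge> 0 \<and>
     (\<forall>x. (f has_derivative (\<lambda>h. g x \<bullet> h)) (at x)) \<and>
     (\<forall>x y. \<mu> / 2 * (normM M (x - y))\<^sup>2 \<le> bregman f g y x \<and>
            bregman f g y x \<le> L / 2 * (normM M (x - y))\<^sup>2)"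

end

theory Submission
  imports Defs
begin

lemma spd_nonneg: "spd M \<Longrightarrow> (M *v x) \<bullet> x \<ge> 0"
  unfolding spd_def by (cases "x = 0") (auto intro: less_imp_le)

lemma normM_sq: "spd M \<Longrightarrow> (normM M x)\<^sup>2 = (M *v x) \<bullet> x"
  unfolding normM_def using spd_nonneg by simp

lemma spd_inv: assumes "spd M" shows "M ** matrix_inv M = mat 1"
proof -
  have "\<forall>x. M *v x = 0 \<longrightarrow> x = 0"
    using assms unfolding spd_def by (metis inner_zero_left less_irrefl)
  then have "\<exists>B. B ** M = mat 1" using matrix_left_invertible_ker by blast
  then have "invertible M" using invertible_left_inverse by blast
  then have "\<exists>A'. M ** A' = mat 1 \<and> A' ** M = mat 1" unfolding invertible_def .
  then show ?thesis unfolding matrix_inv_def by (metis (mono_tags, lifting) someI_ex)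
qed

theorem lemma3p1:
  fixes B :: "real^'m^'n" and IV :: "real^'m^'m"
    and f :: "real^'m \<Rightarrow> real" and gradf :: "real^'m \<Rightarrow> real^'m"
    and \<mu> L :: real and u1 u2 :: "real^'m" and p1 p2 :: "real^'n"
  assumes "spd IV"
    and "S11 IV \<mu> L f gradf"
  shows "let v1 = u1 + matrix_inv IV *v (transpose B *v p1);
             v2 = u2 + matrix_inv IV *v (transpose B *v p2)
         in (gradf u1 - gradf u2) \<bullet> (matrix_inv IV *v (transpose B *v (p1 - p2)))
            \<ge> \<mu> / 2 * (normM IV (v1 - v2))\<^sup>2
              - L / 2 * (normM (matrix_inv IV) (transpose B *v (p1 - p2)))\<^sup>2
              - 1 / 2 * ((gradf u1 - gradf u2) \<bullet> (u1 - u2))"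
proof -
  define y where "y = transpose B *v (p1 - p2)"
  define w where "w = matrix_inv IV *v y"
  define d where "d = u1 - u2"
  have yw: "IV *v w = y" unfolding w_def
    by (simp add: matrix_vector_mul_assoc spd_inv[OF assms(1)])
  have v: "(u1 + matrix_inv IV *v (transpose B *v p1)) - (u2 + matrix_inv IV *v (transpose B *v p2)) = d + w"
    unfolding d_def w_def y_def by (simp add: matrix_vector_mult_diff_distrib algebra_simps)
  have nw: "(normM (matrix_inv IV) y)\<^sup>2 = (IV *v w) \<bullet> w"
  proof -
    have "0 \<le> (matrix_inv IV *v y) \<bullet> y" using spd_nonneg[OF assms(1), of w] yw
      by (simp add: w_def inner_commute)
    then show ?thesis unfolding normM_def using yw by (simp add: w_def inner_commute)
  qed
  have nv: "(normM IV (d + w))\<^sup>2 = (IV *v (d+w)) \<bullet> (d+w)" using normM_sq[OF assms(1)] .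
  let ?D = "bregman f gradf"
  have lo: "\<And>x z. \<mu> / 2 * ((IV *v (x - z)) \<bullet> (x - z)) \<le> ?D z x"
    using assms(2) normM_sq[OF assms(1)] unfolding S11_def by metis
  have hi: "\<And>x z. ?D z x \<le> L / 2 * ((IV *v (x - z)) \<bullet> (x - z))"
    using assms(2) normM_sq[OF assms(1)] unfolding S11_def by metis
  have sym: "\<And>a. (IV *v (- a)) \<bullet> (- a) = (IV *v a) \<bullet> a"
  proof -
    fix a :: "real^'m"
    have "IV *v (- a) = - (IV *v a)"
      by (simp add: matrix_vector_mult_def vec_eq_iff sum_negf)
    then show "(IV *v (- a)) \<bullet> (- a) = (IV *v a) \<bullet> a" by simp
  qed
  define z1 where "z1 = u1 + w"
  define z2 where "z2 = u2 - w"
  have e1: "(gradf u1 - gradf u2) \<bullet> w = ?D z1 u2 - ?D z1 u1 - ?D u1 u2"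
    unfolding bregman_def z1_def by (simp add: algebra_simps inner_diff_left inner_diff_right inner_add_right)
  have e2: "(gradf u1 - gradf u2) \<bullet> w = ?D z2 u1 - ?D z2 u2 - ?D u2 u1"
    unfolding bregman_def z2_def by (simp add: algebra_simps inner_diff_left inner_diff_right inner_add_right)
  have e3: "(gradf u1 - gradf u2) \<bullet> d = ?D u1 u2 + ?D u2 u1"
    unfolding bregman_def d_def by (simp add: algebra_simps inner_diff_left inner_diff_right)
  have z1a: "u2 - z1 = - (d + w)" unfolding z1_def d_def by simp
  have z1b: "u1 - z1 = - w" unfolding z1_def by simp
  have z2a: "u1 - z2 = d + w" unfolding z2_def d_def by simp
  have z2b: "u2 - z2 = w" unfolding z2_def by simp
  have a1: "\<mu> / 2 * ((IV *v (d+w)) \<bullet> (d+w)) \<le> ?D z1 u2"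
    using lo[where x=u2 and z=z1] unfolding z1a sym .
  have a2: "?D z1 u1 \<le> L / 2 * ((IV *v w) \<bullet> w)"
    using hi[where x=u1 and z=z1] unfolding z1b sym .
  have a3: "\<mu> / 2 * ((IV *v (d+w)) \<bullet> (d+w)) \<le> ?D z2 u1"
    using lo[where x=u1 and z=z2] unfolding z2a .
  have a4: "?D z2 u2 \<le> L / 2 * ((IV *v w) \<bullet> w)"
    using hi[where x=u2 and z=z2] unfolding z2b .
  have "(gradf u1 - gradf u2) \<bullet> w \<ge> \<mu> / 2 * ((IV *v (d+w)) \<bullet> (d+w)) - L / 2 * ((IV *v w) \<bullet> w)
        - 1/2 * ((gradf u1 - gradf u2) \<bullet> d)"
    using e1 e2 e3 a1 a2 a3 a4 by linarith
  then show ?thesis unfolding Let_def v using nw nv unfolding y_def w_def d_def by simp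
qed

end
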